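(* Let $q>0$, $n\ge1$, and let $(p_m)_{m\ge1}$ be the $q$-Mallows process. Then each of the following random permutations of $\{1,\dots,n\}$ is distributed as $\mu_{n,q}$: (i) $\pi(i)=p_n(n+1-i)$; (ii) $\pi(i)=n+1-p_n^{-1}(i)$; (iii) $\pi(i)=p_n^{-1}(n+1-i)$; (iv) $\pi(i)=n+1-p_n(i)$.
   Context: For $q>0$ and $n\ge1$, $\mu_{n,q}(\pi)=q^{\mathrm{inv}(\pi)}/Z_{n,q}$ on $S_n$, with $\mathrm{inv}(\pi)$ the number of pairs $i<j$ with $\pi(i)>\pi(j)$ and $Z_{n,q}$ a normalizing constant. The $q$-Mallows process is the sequence of random permutations $p_n\in S_n$ defined as follows: let $(p_n(n))_{n\ge1}$ be independent with $\mathbb{P}(p_n(n)=j)=\frac{q^{j-1}}{1+q+\dots+q^{n-1}}$ for $1\le j\le n$; $p_1$ is the unique permutation of $\{1\}$, and for $n\ge2$, $p_n$ takes the value $p_n(n)$ at $n$ and, for $1\le i\le n-1$, $p_n(i)=p_{n-1}(i)$ if $p_{n-1}(i)<p_n(n)$ and $p_n(i)=p_{n-1}(i)+1$ otherwise. *)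

theory Defs
  imports "HOL-Probability.Probability" "HOL-Combinatorics.Permutations"
begin

definition inv_count :: "nat \<Rightarrow> (nat \<Rightarrow> nat) \<Rightarrow> nat" where
  "inv_count n \<pi> = card {(i, j). 1 \<le> i \<and> i < j \<and> j \<le> n \<and> \<pi> i > \<pi> j}"

definition mallows_Z :: "nat \<Rightarrow> real \<Rightarrow> real" where
  "mallows_Z n q = (\<Sum>\<sigma> \<in> {\<sigma>. \<sigma> permutes {1..n}}. q ^ inv_count n \<sigma>)"

definition mallows_mu :: "nat \<Rightarrow> real \<Rightarrow> (nat \<Rightarrow> nat) \<Rightarrow> real" where
  "mallows_mu n q \<sigma> = q ^ inv_count n \<sigma> / mallows_Z n q"

text \<open>The q-Mallows process built from the values J k = p_k(k).
  mallows_perm J n is p_n (identity outside {1..n}); p_0 = id, and p_1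
  is forced to be the identity on {1} as J 1 = 1 almost surely.\<close>
fun mallows_perm :: "(nat \<Rightarrow> nat) \<Rightarrow> nat \<Rightarrow> (nat \<Rightarrow> nat)" where
  "mallows_perm J 0 = id"
| "mallows_perm J (Suc n) = (\<lambda>i.
     if i = Suc n then J (Suc n)
     else if 1 \<le> i \<and> i \<le> n then
       (if mallows_perm J n i < J (Suc n) then mallows_perm J n i else mallows_perm J n i + 1)
     else i)"

end

theory Submission
  imports Defs
begin

lemma mp_cong: "(\<And>k. k \<in> {1..n} \<Longrightarrow> J k = J' k) \<Longrightarrow> mallows_perm J n = mallows_perm J' n"
proof (induction n)
  case 0 then show ?case by simp
next
  case (Suc n)
  have "mallows_perm J n = mallows_perm J' n" using Suc by auto
  moreover have "J (Suc n) = J' (Suc n)" using Suc by auto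
  ultimately show ?case unfolding mallows_perm.simps by (simp only:)
qed

definition good :: "nat \<Rightarrow> (nat \<Rightarrow> nat) \<Rightarrow> bool" where
  "good n J \<longleftrightarrow> (\<forall>k\<in>{1..n}. 1 \<le> J k \<and> J k \<le> k)"

lemma mp_Suc_n: "mallows_perm J (Suc n) (Suc n) = J (Suc n)" by simp

lemma mp_Suc_le: "1 \<le> i \<Longrightarrow> i \<le> n \<Longrightarrow> mallows_perm J (Suc n) i =
   (if mallows_perm J n i < J (Suc n) then mallows_perm J n i else mallows_perm J n i + 1)"
  by simp

lemma mp_out: "i \<notin> {1..n} \<Longrightarrow> mallows_perm J n i = i"
  by (cases n) auto

lemma mp_permutes: "good n J \<Longrightarrow> mallows_perm J n permutes {1..n}"
proof (induction n)
  case 0 then show ?case by (simp add: permutes_id[unfolded id_def])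
next
  case (Suc n)
  let ?P = "mallows_perm J n" and ?Q = "mallows_perm J (Suc n)" and ?j = "J (Suc n)"
  have gn: "good n J" using Suc.prems by (auto simp: good_def)
  have P: "?P permutes {1..n}" using Suc.IH gn by blast
  have j: "1 \<le> ?j" "?j \<le> Suc n" using Suc.prems by (auto simp: good_def)
  have Pin: "\<And>i. i \<in> {1..n} \<Longrightarrow> ?P i \<in> {1..n}" using P by (metis permutes_in_image)
  have Pinj: "inj_on ?P {1..n}" using P permutes_inj_on by blast
  have img: "?Q ` {1..Suc n} \<subseteq> {1..Suc n}"
  proof
    fix v assume "v \<in> ?Q ` {1..Suc n}"
    then obtain i where i: "i \<in> {1..Suc n}" "v = ?Q i" by blast
    show "v \<in> {1..Suc n}"
    proof (cases "i = Suc n")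
      case True then show ?thesis using i j by simp
    next
      case False then have "i \<in> {1..n}" using i by auto
      then show ?thesis using i Pin[of i] by (auto simp del: mallows_perm.simps simp: mp_Suc_le)
    qed
  qed
  have inj: "inj_on ?Q {1..Suc n}"
  proof (rule inj_onI)
    fix x y assume x: "x \<in> {1..Suc n}" and y: "y \<in> {1..Suc n}" and e: "?Q x = ?Q y"
    show "x = y"
    proof (cases "x = Suc n"; cases "y = Suc n")
      assume "x \<noteq> Suc n" "y \<noteq> Suc n"
      then have xi: "x \<in> {1..n}" "y \<in> {1..n}" using x y by auto
      then have "?P x = ?P y" using e by (auto simp del: mallows_perm.simps simp: mp_Suc_le mp_Suc_n split: if_splits)
      then show ?thesis using Pinj xi by (meson inj_onD)
    next
      assume "x = Suc n" "y \<noteq> Suc n"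
      then have xi: "y \<in> {1..n}" using x y by auto
      then show ?thesis using e \<open>x = Suc n\<close> by (auto simp del: mallows_perm.simps simp: mp_Suc_le mp_Suc_n split: if_splits)
    next
      assume "x \<noteq> Suc n" "y = Suc n"
      then have xi: "x \<in> {1..n}" using x y by auto
      then show ?thesis using e \<open>y = Suc n\<close> by (auto simp del: mallows_perm.simps simp: mp_Suc_le mp_Suc_n split: if_splits)
    qed simp
  qed
  have "bij_betw ?Q {1..Suc n} {1..Suc n}"
    unfolding bij_betw_def using inj img endo_inj_surj[of "{1..Suc n}" ?Q] by auto
  moreover have "\<And>x. x \<notin> {1..Suc n} \<Longrightarrow> ?Q x = x" by (rule mp_out)
  ultimately show ?case by (rule bij_imp_permutes)
qed

lemma mp_order:
  assumes "m \<le> n" "i \<in> {1..m}" "k \<in> {1..m}"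
  shows "mallows_perm J n i < mallows_perm J n k \<longleftrightarrow> mallows_perm J m i < mallows_perm J m k"
  using assms(1)
proof (induction n rule: dec_induct)
  case base then show ?case by simp
next
  case (step n)
  have "i \<in> {1..n}" "k \<in> {1..n}" using assms step by auto
  then show ?case using step.IH
    by (auto simp del: mallows_perm.simps simp: mp_Suc_le)
qed

lemma card_below_perm:
  assumes P: "P permutes A" and fin: "finite A"
  shows "card {i\<in>A. P i < a} = card {v\<in>A. v < a}"
proof -
  have "P ` {i\<in>A. P i < a} = {v\<in>A. v < a}"
  proof
    show "P ` {i\<in>A. P i < a} \<subseteq> {v\<in>A. v < a}" using P by (auto simp: permutes_in_image)
    show "{v\<in>A. v < a} \<subseteq> P ` {i\<in>A. P i < a}"
    proof
      fix v assume v: "v \<in> {v\<in>A. v < a}"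
      then have "v \<in> P ` A" using permutes_image[OF P] by simp
      then obtain i where "i \<in> A" "v = P i" by auto
      then show "v \<in> P ` {i\<in>A. P i < a}" using v by auto
    qed
  qed
  moreover have "inj_on P {i\<in>A. P i < a}" using permutes_inj_on[OF P] by (rule inj_on_subset) auto
  ultimately show ?thesis by (metis card_image)
qed

lemma mp_rank:
  assumes g: "good n J" and k: "k \<in> {1..n}"
  shows "card {i. 1 \<le> i \<and> i < k \<and> mallows_perm J n i < mallows_perm J n k} = J k - 1"
proof -
  have gk: "good k J" using g k by (auto simp: good_def)
  have Jk: "J k \<le> k" using gk k by (auto simp: good_def)
  have "{i. 1 \<le> i \<and> i < k \<and> mallows_perm J n i < mallows_perm J n k}
      = {i. 1 \<le> i \<and> i < k \<and> mallows_perm J k i < mallows_perm J k k}"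
    using mp_order[of k n _ k J] k by auto
  also have "mallows_perm J k k = J k" using k by (cases k) auto
  also have "{i. 1 \<le> i \<and> i < k \<and> mallows_perm J k i < J k} = {i\<in>{1..k}. mallows_perm J k i < J k}"
    using k \<open>mallows_perm J k k = J k\<close> by (auto simp: le_less)
  also have "card \<dots> = card {v\<in>{1..k}. v < J k}"
    by (rule card_below_perm[OF mp_permutes[OF gk]]) simp
  also have "{v\<in>{1..k}. v < J k} = {1..<J k}" using Jk by auto
  finally show ?thesis by simp
qed

lemma card_pairs_sum:
  fixes n :: nat
  shows "card {(i, j). 1 \<le> i \<and> i < j \<and> j \<le> n \<and> R i j} = (\<Sum>j\<in>{1..n}. card {i. 1 \<le> i \<and> i < j \<and> R i j})"
proof -
  have "{(i, j). 1 \<le> i \<and> i < j \<and> j \<le> n \<and> R i j} = (\<lambda>(j,i). (i,j)) ` (SIGMA j:{1..n}. {i. 1 \<le> i \<and> i < j \<and> R i j})"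
    by (auto simp: image_iff)
  moreover have "inj_on (\<lambda>(j,i). (i,j)) (SIGMA j:{1..n}. {i. 1 \<le> i \<and> i < j \<and> R i j})"
    by (auto simp: inj_on_def)
  moreover have "card (SIGMA j:{1..n}. {i. 1 \<le> i \<and> i < j \<and> R i j}) = (\<Sum>j\<in>{1..n}. card {i. 1 \<le> i \<and> i < j \<and> R i j})"
    by (rule card_SigmaI) auto
  ultimately show ?thesis by (simp add: card_image)
qed

definition Cp :: "nat \<Rightarrow> nat" where "Cp n = card {(i, j). 1 \<le> i \<and> i < j \<and> j \<le> (n::nat)}"

lemma Cp_sum: "Cp n = (\<Sum>j\<in>{1..n}. j - 1)"
proof -
  have "card {i. 1 \<le> i \<and> i < j} = j - 1" for j :: nat
  proof -
    have "{i. 1 \<le> i \<and> i < j} = {1..<j}" by auto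
    then show ?thesis by simp
  qed
  then show ?thesis using card_pairs_sum[of n "\<lambda>_ _. True"] by (simp add: Cp_def)
qed

lemma inv_count_sum: "inv_count n \<sigma> = (\<Sum>k\<in>{1..n}. card {i. 1 \<le> i \<and> i < k \<and> \<sigma> i > \<sigma> k})"
  unfolding inv_count_def by (rule card_pairs_sum)

lemma card_greater:
  assumes P: "\<sigma> permutes {1..n}" and k: "k \<in> {1..n}"
  shows "card {i. 1 \<le> i \<and> i < k \<and> \<sigma> i > \<sigma> k} = (k - 1) - card {i. 1 \<le> i \<and> i < k \<and> \<sigma> i < \<sigma> k}"
proof -
  let ?A = "{i. 1 \<le> i \<and> i < k \<and> \<sigma> i > \<sigma> k}" and ?B = "{i. 1 \<le> i \<and> i < k \<and> \<sigma> i < \<sigma> k}"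
  have ne: "\<sigma> i \<noteq> \<sigma> k" if "i < k" for i
  proof
    assume "\<sigma> i = \<sigma> k"
    then have "i = k" using permutes_inj[OF P] by (simp add: inj_eq)
    then show False using that by simp
  qed
  have U: "{1..<k} = ?A \<union> ?B"
  proof (intro equalityI subsetI)
    fix i assume "i \<in> {1..<k}"
    then show "i \<in> ?A \<union> ?B" using ne[of i] by (auto simp add: linorder_neq_iff)
  qed auto
  have fA: "finite ?A" by (rule finite_subset[of _ "{..<k}"]) auto
  have fB: "finite ?B" by (rule finite_subset[of _ "{..<k}"]) auto
  have D: "?A \<inter> ?B = {}" by auto
  have "card {1..<k} = card ?A + card ?B" unfolding U by (rule card_Un_disjoint[OF fA fB D])
  then show ?thesis by simp
qed


lemma inv_count_mp:
  assumes g: "good n J"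
  shows "inv_count n (mallows_perm J n) = (\<Sum>k\<in>{1..n}. k - J k)"
  unfolding inv_count_sum
proof (rule sum.cong[OF refl])
  fix k assume k: "k \<in> {1..n}"
  have "J k \<le> k" "1 \<le> J k" using g k by (auto simp: good_def)
  then show "card {i. 1 \<le> i \<and> i < k \<and> mallows_perm J n i > mallows_perm J n k} = k - J k"
    using card_greater[OF mp_permutes[OF g] k] mp_rank[OF g k] by simp
qed

lemma inv_split:
  assumes P: "\<tau> permutes {1..n}"
  shows "inv_count n \<tau> + card {(i, j). 1 \<le> i \<and> i < j \<and> j \<le> n \<and> \<tau> i < \<tau> j} = Cp n"
proof -
  let ?A = "{(i, j). 1 \<le> i \<and> i < j \<and> j \<le> n \<and> \<tau> i > \<tau> j}" and ?B = "{(i, j). 1 \<le> i \<and> i < j \<and> j \<le> n \<and> \<tau> i < \<tau> j}"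
  have ne: "\<tau> i \<noteq> \<tau> j" if "i < j" for i j
  proof
    assume "\<tau> i = \<tau> j"
    then have "i = j" using permutes_inj[OF P] by (simp add: inj_eq)
    then show False using that by simp
  qed
  have U: "{(i, j). 1 \<le> i \<and> i < j \<and> j \<le> n} = ?A \<union> ?B"
  proof (intro equalityI subsetI)
    fix x assume "x \<in> {(i, j). 1 \<le> i \<and> i < j \<and> j \<le> n}"
    then show "x \<in> ?A \<union> ?B" using ne[of "fst x" "snd x"] by (auto simp add: linorder_neq_iff)
  qed auto
  have fin: "finite {(i, j). 1 \<le> i \<and> i < j \<and> j \<le> (n::nat)}"
    by (rule finite_subset[of _ "{..n} \<times> {..n}"]) auto
  have fA: "finite ?A" by (rule finite_subset[OF _ fin]) auto
  have fB: "finite ?B" by (rule finite_subset[OF _ fin]) auto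
  have D: "?A \<inter> ?B = {}" by auto
  show ?thesis unfolding Cp_def inv_count_def U by (rule card_Un_disjoint[OF fA fB D, symmetric])
qed

definition T1 :: "nat \<Rightarrow> (nat \<Rightarrow> nat) \<Rightarrow> nat \<Rightarrow> nat" where
  "T1 n \<tau> = (\<lambda>i. if i \<in> {1..n} then \<tau> (n + 1 - i) else i)"
definition T4 :: "nat \<Rightarrow> (nat \<Rightarrow> nat) \<Rightarrow> nat \<Rightarrow> nat" where
  "T4 n \<tau> = (\<lambda>i. if i \<in> {1..n} then n + 1 - \<tau> i else i)"

lemma inv_T4:
  assumes P: "\<tau> permutes {1..n}"
  shows "inv_count n (T4 n \<tau>) + inv_count n \<tau> = Cp n"
proof -
  have r: "\<tau> i \<in> {1..n}" if "i \<in> {1..n}" for i using P that by (metis permutes_in_image)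
  have "{(i, j). 1 \<le> i \<and> i < j \<and> j \<le> n \<and> T4 n \<tau> i > T4 n \<tau> j} = {(i, j). 1 \<le> i \<and> i < j \<and> j \<le> n \<and> \<tau> i < \<tau> j}"
  proof (intro equalityI subsetI)
    fix x assume x: "x \<in> {(i, j). 1 \<le> i \<and> i < j \<and> j \<le> n \<and> T4 n \<tau> i > T4 n \<tau> j}"
    then have "fst x \<in> {1..n}" "snd x \<in> {1..n}" by auto
    then show "x \<in> {(i, j). 1 \<le> i \<and> i < j \<and> j \<le> n \<and> \<tau> i < \<tau> j}"
      using x r[of "fst x"] r[of "snd x"] by (auto simp: T4_def)
  next
    fix x assume x: "x \<in> {(i, j). 1 \<le> i \<and> i < j \<and> j \<le> n \<and> \<tau> i < \<tau> j}"
    then have "fst x \<in> {1..n}" "snd x \<in> {1..n}" by auto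
    then show "x \<in> {(i, j). 1 \<le> i \<and> i < j \<and> j \<le> n \<and> T4 n \<tau> i > T4 n \<tau> j}"
      using x r[of "fst x"] r[of "snd x"] by (auto simp: T4_def)
  qed
  then show ?thesis using inv_split[OF P] unfolding inv_count_def by simp
qed

lemma inv_T1:
  assumes P: "\<tau> permutes {1..n}"
  shows "inv_count n (T1 n \<tau>) + inv_count n \<tau> = Cp n"
proof -
  let ?A = "{(i, j). 1 \<le> i \<and> i < j \<and> j \<le> n \<and> T1 n \<tau> i > T1 n \<tau> j}"
  let ?B = "{(i, j). 1 \<le> i \<and> i < j \<and> j \<le> n \<and> \<tau> i < \<tau> j}"
  let ?f = "\<lambda>(i, j). (n + 1 - j, n + 1 - i)"
  have "bij_betw ?f ?A ?B"
  proof (rule bij_betw_byWitness[where f' = ?f])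
    show "\<forall>a\<in>?A. ?f (?f a) = a" by auto
    show "\<forall>a\<in>?B. ?f (?f a) = a" by auto
    show "?f ` ?A \<subseteq> ?B"
    proof
      fix y assume "y \<in> ?f ` ?A"
      then obtain i j where ij: "1 \<le> i" "i < j" "j \<le> n" "T1 n \<tau> i > T1 n \<tau> j" "y = (n + 1 - j, n + 1 - i)" by auto
      then have "\<tau> (n + 1 - i) > \<tau> (n + 1 - j)" by (simp add: T1_def)
      then show "y \<in> ?B" using ij by auto
    qed
    show "?f ` ?B \<subseteq> ?A"
    proof
      fix y assume "y \<in> ?f ` ?B"
      then obtain i j where ij: "1 \<le> i" "i < j" "j \<le> n" "\<tau> i < \<tau> j" "y = (n + 1 - j, n + 1 - i)" by auto
      have "T1 n \<tau> (n + 1 - j) = \<tau> j" "T1 n \<tau> (n + 1 - i) = \<tau> i" using ij by (auto simp: T1_def)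
      then show "y \<in> ?A" using ij by auto
    qed
  qed
  then have "card ?A = card ?B" by (rule bij_betw_same_card)
  then show ?thesis using inv_split[OF P] unfolding inv_count_def by simp
qed

lemma inv_inv_count:
  assumes P: "\<tau> permutes {1..n}"
  shows "inv_count n (inv \<tau>) = inv_count n \<tau>"
proof -
  let ?A = "{(i, j). 1 \<le> i \<and> i < j \<and> j \<le> n \<and> inv \<tau> i > inv \<tau> j}"
  let ?B = "{(i, j). 1 \<le> i \<and> i < j \<and> j \<le> n \<and> \<tau> i > \<tau> j}"
  have Pi: "inv \<tau> permutes {1..n}" using P by (rule permutes_inv)
  have r: "\<tau> i \<in> {1..n}" if "i \<in> {1..n}" for i using P that by (metis permutes_in_image)
  have ri: "inv \<tau> i \<in> {1..n}" if "i \<in> {1..n}" for i using Pi that by (metis permutes_in_image)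
  have a1: "inv \<tau> (\<tau> x) = x" for x using P by (simp add: permutes_inverses(2))
  have a2: "\<tau> (inv \<tau> x) = x" for x using P by (simp add: permutes_inverses(1))
  have "bij_betw (\<lambda>(i, j). (inv \<tau> j, inv \<tau> i)) ?A ?B"
  proof (rule bij_betw_byWitness[where f' = "\<lambda>(i, j). (\<tau> j, \<tau> i)"])
    show "\<forall>a\<in>?A. (\<lambda>(i, j). (\<tau> j, \<tau> i)) ((\<lambda>(i, j). (inv \<tau> j, inv \<tau> i)) a) = a" by (auto simp: a2)
    show "\<forall>a\<in>?B. (\<lambda>(i, j). (inv \<tau> j, inv \<tau> i)) ((\<lambda>(i, j). (\<tau> j, \<tau> i)) a) = a" by (auto simp: a1)
    show "(\<lambda>(i, j). (inv \<tau> j, inv \<tau> i)) ` ?A \<subseteq> ?B"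
    proof
      fix y assume "y \<in> (\<lambda>(i, j). (inv \<tau> j, inv \<tau> i)) ` ?A"
      then obtain i j where ij: "1 \<le> i" "i < j" "j \<le> n" "inv \<tau> i > inv \<tau> j" "y = (inv \<tau> j, inv \<tau> i)" by auto
      have "inv \<tau> j \<in> {1..n}" "inv \<tau> i \<in> {1..n}" using ri ij by auto
      then show "y \<in> ?B" using ij by (auto simp: a2)
    qed
    show "(\<lambda>(i, j). (\<tau> j, \<tau> i)) ` ?B \<subseteq> ?A"
    proof
      fix y assume "y \<in> (\<lambda>(i, j). (\<tau> j, \<tau> i)) ` ?B"
      then obtain i j where ij: "1 \<le> i" "i < j" "j \<le> n" "\<tau> i > \<tau> j" "y = (\<tau> j, \<tau> i)" by auto
      have "\<tau> j \<in> {1..n}" "\<tau> i \<in> {1..n}" using r ij by auto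
      then show "y \<in> ?A" using ij by (auto simp: a1)
    qed
  qed
  then have "card ?A = card ?B" by (rule bij_betw_same_card)
  then show ?thesis unfolding inv_count_def by simp
qed

abbreviation GG :: "nat \<Rightarrow> (nat \<Rightarrow> nat) set" where "GG n \<equiv> Pi\<^sub>E {1..n} (\<lambda>k. {1..k})"

lemma GG_good: "v \<in> GG n \<Longrightarrow> good n v"
  by (auto simp: good_def PiE_iff)

lemma Phi_inj: "inj_on (\<lambda>v. mallows_perm v n) (GG n)"
proof (rule inj_onI)
  fix v w assume v: "v \<in> GG n" and w: "w \<in> GG n" and e: "mallows_perm v n = mallows_perm w n"
  show "v = w"
  proof (rule PiE_ext[OF v w])
    fix k assume k: "k \<in> {1..n}"
    have "v k - 1 = w k - 1" using mp_rank[OF GG_good[OF v] k] mp_rank[OF GG_good[OF w] k] e by simp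
    moreover have "1 \<le> v k" "1 \<le> w k" using v w k by (auto simp: PiE_iff)
    ultimately show "v k = w k" by simp
  qed
qed

lemma Phi_image: "(\<lambda>v. mallows_perm v n) ` GG n = {\<sigma>. \<sigma> permutes {1..n}}"
proof (rule card_subset_eq)
  show "finite {\<sigma>. \<sigma> permutes {1..n}}" by (rule finite_permutations) simp
  show "(\<lambda>v. mallows_perm v n) ` GG n \<subseteq> {\<sigma>. \<sigma> permutes {1..n}}"
    using mp_permutes GG_good by blast
  have "card ((\<lambda>v. mallows_perm v n) ` GG n) = card (GG n)" by (rule card_image[OF Phi_inj])
  also have "\<dots> = (\<Prod>k\<in>{1..n}. card {1..k})" by (rule card_PiE) simp
  also have "\<dots> = fact n" by (simp add: fact_prod)
  also have "\<dots> = card {\<sigma>. \<sigma> permutes {1..n}}" by (rule card_permutations[symmetric]) simp_all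
  finally show "card ((\<lambda>v. mallows_perm v n) ` GG n) = card {\<sigma>. \<sigma> permutes {1..n}}" .
qed

lemma GG_sum: "v \<in> GG n \<Longrightarrow> (\<Sum>k\<in>{1..n}. v k - 1) + (\<Sum>k\<in>{1..n}. k - v k) = Cp n"
  unfolding Cp_sum sum.distrib[symmetric]
  by (rule sum.cong) (auto simp: PiE_iff)

definition DD :: "nat \<Rightarrow> real \<Rightarrow> real" where "DD n q = (\<Prod>k\<in>{1..n}. \<Sum>i<k. q ^ i)"

lemma geom_rev: "(\<Sum>j\<in>{1..k}. (q::real) ^ (k - j)) = (\<Sum>i<k. q ^ i)"
  by (rule sum.reindex_bij_witness[where i = "\<lambda>i. k - i" and j = "\<lambda>j. k - j"]) auto

lemma Z_eq: "mallows_Z n q = DD n q"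
proof -
  have "mallows_Z n q = (\<Sum>v\<in>GG n. q ^ inv_count n (mallows_perm v n))"
    unfolding mallows_Z_def Phi_image[symmetric] by (rule sum.reindex[OF Phi_inj, unfolded comp_def])
  also have "\<dots> = (\<Sum>v\<in>GG n. \<Prod>k\<in>{1..n}. q ^ (k - v k))"
    by (rule sum.cong[OF refl]) (simp add: inv_count_mp[OF GG_good] power_sum)
  also have "\<dots> = (\<Prod>k\<in>{1..n}. \<Sum>j\<in>{1..k}. q ^ (k - j))"
    by (rule prod_sum_PiE[symmetric]) auto
  also have "\<dots> = DD n q" unfolding DD_def geom_rev ..
  finally show ?thesis .
qed

abbreviation PP :: "nat \<Rightarrow> (nat \<Rightarrow> nat) set" where "PP n \<equiv> {\<sigma>. \<sigma> permutes {1..n}}"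

lemma perm_out: "\<tau> permutes S \<Longrightarrow> i \<notin> S \<Longrightarrow> \<tau> i = i"
  by (simp add: permutes_def)

lemma perm_in: "\<tau> permutes S \<Longrightarrow> i \<in> S \<Longrightarrow> \<tau> i \<in> S"
  by (metis permutes_in_image)

lemma T1_invol: "\<tau> permutes {1..n} \<Longrightarrow> T1 n (T1 n \<tau>) = \<tau>"
  by (rule ext) (auto simp: T1_def perm_out)

lemma T4_invol: "\<tau> permutes {1..n} \<Longrightarrow> T4 n (T4 n \<tau>) = \<tau>"
proof (rule ext)
  fix i assume P: "\<tau> permutes {1..n}"
  show "T4 n (T4 n \<tau>) i = \<tau> i"
  proof (cases "i \<in> {1..n}")
    case True then show ?thesis using perm_in[OF P True] by (auto simp: T4_def)
  qed (auto simp: T4_def perm_out[OF P])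
qed

lemma T1_perm: assumes P: "\<tau> permutes {1..n}" shows "T1 n \<tau> permutes {1..n}"
proof (rule bij_imp_permutes)
  show "\<And>x. x \<notin> {1..n} \<Longrightarrow> T1 n \<tau> x = x" by (auto simp: T1_def)
  have img: "T1 n \<tau> x \<in> {1..n}" if "x \<in> {1..n}" for x
  proof -
    have "n + 1 - x \<in> {1..n}" using that by auto
    then show ?thesis using that perm_in[OF P, of "n + 1 - x"] by (simp add: T1_def)
  qed
  have inj: "inj_on (T1 n \<tau>) {1..n}"
  proof (rule inj_onI)
    fix x y assume "x \<in> {1..n}" "y \<in> {1..n}" "T1 n \<tau> x = T1 n \<tau> y"
    then have "\<tau> (n + 1 - x) = \<tau> (n + 1 - y)" by (simp add: T1_def)
    then have "n + 1 - x = n + 1 - y" using permutes_inj[OF P] by (simp add: inj_eq)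
    then show "x = y" using \<open>x \<in> {1..n}\<close> \<open>y \<in> {1..n}\<close> by auto
  qed
  show "bij_betw (T1 n \<tau>) {1..n} {1..n}"
    unfolding bij_betw_def using inj endo_inj_surj[of "{1..n}" "T1 n \<tau>"] img by blast
qed

lemma T4_perm: assumes P: "\<tau> permutes {1..n}" shows "T4 n \<tau> permutes {1..n}"
proof (rule bij_imp_permutes)
  show "\<And>x. x \<notin> {1..n} \<Longrightarrow> T4 n \<tau> x = x" by (auto simp: T4_def)
  have img: "T4 n \<tau> x \<in> {1..n}" if "x \<in> {1..n}" for x
    using that perm_in[OF P, of x] by (auto simp: T4_def)
  have inj: "inj_on (T4 n \<tau>) {1..n}"
  proof (rule inj_onI)
    fix x y assume x: "x \<in> {1..n}" and y: "y \<in> {1..n}" and "T4 n \<tau> x = T4 n \<tau> y"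
    then have "n + 1 - \<tau> x = n + 1 - \<tau> y" by (simp add: T4_def)
    then have "\<tau> x = \<tau> y" using perm_in[OF P x] perm_in[OF P y] by auto
    then show "x = y" using permutes_inj[OF P] by (simp add: inj_eq)
  qed
  show "bij_betw (T4 n \<tau>) {1..n} {1..n}"
    unfolding bij_betw_def using inj endo_inj_surj[of "{1..n}" "T4 n \<tau>"] img by blast
qed

lemma bij_T1: "bij_betw (T1 n) (PP n) (PP n)"
  by (rule bij_betw_byWitness[where f'="T1 n"]) (use T1_invol T1_perm in blast)+

lemma bij_T4: "bij_betw (T4 n) (PP n) (PP n)"
  by (rule bij_betw_byWitness[where f'="T4 n"]) (use T4_invol T4_perm in blast)+

lemma bij_inv: "bij_betw inv (PP n) (PP n)"
  by (rule bij_betw_byWitness[where f' = inv]) (auto simp: inv_inv_eq permutes_bij permutes_inv)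

lemma bij_T1inv: "bij_betw (\<lambda>\<tau>. T1 n (inv \<tau>)) (PP n) (PP n)"
  using bij_betw_trans[OF bij_inv bij_T1] by (simp add: comp_def)

lemma bij_T4inv: "bij_betw (\<lambda>\<tau>. T4 n (inv \<tau>)) (PP n) (PP n)"
  using bij_betw_trans[OF bij_inv bij_T4] by (simp add: comp_def)

lemma inv_T1inv: "\<tau> permutes {1..n} \<Longrightarrow> inv_count n (T1 n (inv \<tau>)) + inv_count n \<tau> = Cp n"
  using inv_T1[OF permutes_inv] inv_inv_count by metis

lemma inv_T4inv: "\<tau> permutes {1..n} \<Longrightarrow> inv_count n (T4 n (inv \<tau>)) + inv_count n \<tau> = Cp n"
  using inv_T4[OF permutes_inv] inv_inv_count by metis

lemma geom_pos: assumes "(q::real) > 0" "k \<ge> 1" shows "(\<Sum>i<k. q ^ i) > 0"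
proof -
  have "0 \<in> {..<k}" using assms by simp
  then have "{..<k} \<noteq> {}" by blast
  then show ?thesis using assms by (intro sum_pos) auto
qed

lemma geom_shift: "(\<Sum>j\<in>{1..k}. (q::real) ^ (j - 1)) = (\<Sum>i<k. q ^ i)"
  by (rule sum.reindex_bij_witness[where i = "\<lambda>i. i + 1" and j = "\<lambda>j. j - 1"]) auto

lemma main_generic:
  fixes M :: "'a measure" and J :: "nat \<Rightarrow> 'a \<Rightarrow> nat" and q :: real and n :: nat
  assumes PS: "prob_space M"
    and q: "q > 0" and n: "n \<ge> 1"
    and meas: "\<And>k. J k \<in> measurable M (count_space UNIV)"
    and ind: "prob_space.indep_vars M (\<lambda>_. count_space UNIV) J {1..}"
    and dist: "\<And>k j. k \<ge> 1 \<Longrightarrow> measure M {\<omega> \<in> space M. J k \<omega> = j} =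
           (if 1 \<le> j \<and> j \<le> k then q ^ (j - 1) / (\<Sum>i<k. q ^ i) else 0)"
    and bT: "bij_betw T (PP n) (PP n)"
    and invT: "\<And>\<tau>. \<tau> permutes {1..n} \<Longrightarrow> inv_count n (T \<tau>) + inv_count n \<tau> = Cp n"
    and \<sigma>: "\<sigma> permutes {1..n}"
  shows "measure M {\<omega> \<in> space M. T (mallows_perm (\<lambda>k. J k \<omega>) n) = \<sigma>} = mallows_mu n q \<sigma>"
proof -
  interpret prob_space M by (rule PS)
  have ev: "{\<omega> \<in> space M. J k \<omega> = j} \<in> sets M" for k j
  proof -
    have "J k -` {j} \<inter> space M \<in> sets M" by (rule measurable_sets[OF meas]) simp
    moreover have "J k -` {j} \<inter> space M = {\<omega> \<in> space M. J k \<omega> = j}" by auto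
    ultimately show ?thesis by simp
  qed
  obtain \<tau> where \<tau>: "\<tau> permutes {1..n}" "T \<tau> = \<sigma>"
    using bT \<sigma> unfolding bij_betw_def by (metis (mono_tags, lifting) image_iff mem_Collect_eq)
  obtain v where v: "v \<in> GG n" "mallows_perm v n = \<tau>"
    using \<tau>(1) Phi_image[of n] by (metis (mono_tags, lifting) image_iff mem_Collect_eq)
  have AEk: "AE \<omega> in M. 1 \<le> J k \<omega> \<and> J k \<omega> \<le> k" if k: "k \<in> {1..n}" for k
  proof -
    let ?E = "{\<omega> \<in> space M. 1 \<le> J k \<omega> \<and> J k \<omega> \<le> k}"
    have "?E = (\<Union>j\<in>{1..k}. {\<omega> \<in> space M. J k \<omega> = j})" by auto
    then have "prob ?E = prob (\<Union>j\<in>{1..k}. {\<omega> \<in> space M. J k \<omega> = j})" by simp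
    also have "\<dots> = (\<Sum>j\<in>{1..k}. prob {\<omega> \<in> space M. J k \<omega> = j})"
      by (rule finite_measure_finite_Union) (auto simp: disjoint_family_on_def ev)
    also have "\<dots> = (\<Sum>j\<in>{1..k}. q ^ (j - 1) / (\<Sum>i<k. q ^ i))"
      using k by (intro sum.cong refl) (simp add: dist)
    also have "\<dots> = (\<Sum>j\<in>{1..k}. q ^ (j - 1)) / (\<Sum>i<k. q ^ i)"
      by (rule sum_divide_distrib[symmetric])
    also have "\<dots> = 1" unfolding geom_shift using geom_pos[OF q, of k] k by simp
    finally have "prob ?E = 1" .
    then have "AE \<omega> in M. \<omega> \<in> ?E" by (rule AE_prob_1)
    then show ?thesis by auto
  qed
  have AEg: "AE \<omega> in M. good n (\<lambda>k. J k \<omega>)"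
    unfolding good_def by (rule AE_finite_allI) (simp, rule AEk)
  let ?A = "{\<omega> \<in> space M. T (mallows_perm (\<lambda>k. J k \<omega>) n) = \<sigma>}"
  let ?B = "{\<omega> \<in> space M. \<forall>k\<in>{1..n}. J k \<omega> = v k}"
  have Bsets: "{\<omega> \<in> space M. \<forall>k\<in>{1..n}. J k \<omega> = u k} \<in> sets M" for u
    using n by (intro sets.sets_Collect_finite_All' ev) auto
  have Asets: "?A \<in> sets M"
  proof -
    let ?U = "Pi\<^sub>E {1..n} (\<lambda>_. UNIV :: nat set) \<inter> {u. T (mallows_perm u n) = \<sigma>}"
    have "?A = (\<Union>u\<in>?U. {\<omega> \<in> space M. \<forall>k\<in>{1..n}. J k \<omega> = u k})"
    proof (intro equalityI subsetI)
      fix \<omega> assume \<omega>: "\<omega> \<in> ?A"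
      let ?u = "restrict (\<lambda>k. J k \<omega>) {1..n}"
      have "mallows_perm ?u n = mallows_perm (\<lambda>k. J k \<omega>) n" by (rule mp_cong) simp
      then have "?u \<in> ?U" using \<omega> by auto
      moreover have "\<omega> \<in> {\<omega>' \<in> space M. \<forall>k\<in>{1..n}. J k \<omega>' = ?u k}" using \<omega> by auto
      ultimately show "\<omega> \<in> (\<Union>u\<in>?U. {\<omega> \<in> space M. \<forall>k\<in>{1..n}. J k \<omega> = u k})" by blast
    next
      fix \<omega> assume "\<omega> \<in> (\<Union>u\<in>?U. {\<omega> \<in> space M. \<forall>k\<in>{1..n}. J k \<omega> = u k})"
      then obtain u where u: "u \<in> ?U" "\<omega> \<in> space M" "\<forall>k\<in>{1..n}. J k \<omega> = u k" by blast
      have "mallows_perm (\<lambda>k. J k \<omega>) n = mallows_perm u n" by (rule mp_cong) (use u in auto)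
      then show "\<omega> \<in> ?A" using u by auto
    qed
    moreover have "countable ?U" by (intro countable_Int1 countable_PiE) auto
    ultimately show ?thesis using Bsets by (auto intro!: sets.countable_UN')
  qed
  have AEeq: "AE \<omega> in M. \<omega> \<in> ?A \<longleftrightarrow> \<omega> \<in> ?B"
    using AEg
  proof (rule AE_mp, intro AE_I2 impI)
    fix \<omega> assume \<omega>: "\<omega> \<in> space M" and g: "good n (\<lambda>k. J k \<omega>)"
    let ?w = "\<lambda>k. J k \<omega>"
    have wp: "mallows_perm ?w n permutes {1..n}" by (rule mp_permutes[OF g])
    have "T (mallows_perm ?w n) = \<sigma> \<longleftrightarrow> mallows_perm ?w n = \<tau>"
      using bT wp \<tau> unfolding bij_betw_def inj_on_def by auto
    also have "\<dots> \<longleftrightarrow> (\<forall>k\<in>{1..n}. J k \<omega> = v k)"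
    proof
      assume e: "mallows_perm ?w n = \<tau>"
      show "\<forall>k\<in>{1..n}. J k \<omega> = v k"
      proof
        fix k assume k: "k \<in> {1..n}"
        have "J k \<omega> - 1 = v k - 1" using mp_rank[OF g k] mp_rank[OF GG_good[OF v(1)] k] e v(2) by simp
        moreover have "1 \<le> v k" "1 \<le> J k \<omega>" using v(1) g k by (auto simp: PiE_iff good_def)
        ultimately show "J k \<omega> = v k" by simp
      qed
    next
      assume "\<forall>k\<in>{1..n}. J k \<omega> = v k"
      then have "mallows_perm ?w n = mallows_perm v n" by (intro mp_cong) auto
      then show "mallows_perm ?w n = \<tau>" using v(2) by simp
    qed
    finally show "\<omega> \<in> ?A \<longleftrightarrow> \<omega> \<in> ?B" using \<omega> by simp
  qed
  have "measure M ?A = measure M ?B"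
    by (rule finite_measure_eq_AE[OF AEeq Asets Bsets])
  also have "?B = (\<Inter>k\<in>{1..n}. J k -` {v k} \<inter> space M)" using n by auto
  also have "prob \<dots> = (\<Prod>k\<in>{1..n}. prob (J k -` {v k} \<inter> space M))"
    using n by (intro indep_varsD[OF ind]) auto
  also have "\<dots> = (\<Prod>k\<in>{1..n}. q ^ (v k - 1) / (\<Sum>i<k. q ^ i))"
  proof (rule prod.cong[OF refl])
    fix k assume k: "k \<in> {1..n}"
    have "J k -` {v k} \<inter> space M = {\<omega> \<in> space M. J k \<omega> = v k}" by auto
    then show "prob (J k -` {v k} \<inter> space M) = q ^ (v k - 1) / (\<Sum>i<k. q ^ i)"
      using dist[of k "v k"] k v(1) by (auto simp: PiE_iff)
  qed
  also have "\<dots> = q ^ (\<Sum>k\<in>{1..n}. v k - 1) / DD n q"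
    by (simp add: prod_dividef power_sum DD_def)
  also have "(\<Sum>k\<in>{1..n}. v k - 1) = inv_count n \<sigma>"
    using GG_sum[OF v(1)] inv_count_mp[OF GG_good[OF v(1)]] invT[OF \<tau>(1)] v(2) \<tau>(2) by simp
  finally show ?thesis by (simp add: mallows_mu_def Z_eq)
qed

theorem corollary2p3:
  fixes M :: "'a measure" and J :: "nat \<Rightarrow> 'a \<Rightarrow> nat" and q :: real and n :: nat
  assumes "prob_space M"
    and "q > 0" and "n \<ge> 1"
    and "\<And>k. J k \<in> measurable M (count_space UNIV)"
    and "prob_space.indep_vars M (\<lambda>_. count_space UNIV) J {1..}"
    and "\<And>k j. k \<ge> 1 \<Longrightarrow> measure M {\<omega> \<in> space M. J k \<omega> = j} =
           (if 1 \<le> j \<and> j \<le> k then q ^ (j - 1) / (\<Sum>i<k. q ^ i) else 0)"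
  defines "p \<equiv> \<lambda>\<omega>. mallows_perm (\<lambda>k. J k \<omega>) n"
  shows "\<forall>\<pi> \<in> {(\<lambda>\<omega> i. if i \<in> {1..n} then p \<omega> (n + 1 - i) else i),
               (\<lambda>\<omega> i. if i \<in> {1..n} then n + 1 - inv (p \<omega>) i else i),
               (\<lambda>\<omega> i. if i \<in> {1..n} then inv (p \<omega>) (n + 1 - i) else i),
               (\<lambda>\<omega> i. if i \<in> {1..n} then n + 1 - p \<omega> i else i)}.
           \<forall>\<sigma>. \<sigma> permutes {1..n} \<longrightarrow>
             measure M {\<omega> \<in> space M. \<pi> \<omega> = \<sigma>} = mallows_mu n q \<sigma>"
proof -
  have G: "\<forall>\<sigma>. \<sigma> permutes {1..n} \<longrightarrow> measure M {\<omega> \<in> space M. T (p \<omega>) = \<sigma>} = mallows_mu n q \<sigma>"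
    if "bij_betw T (PP n) (PP n)" "\<And>\<tau>. \<tau> permutes {1..n} \<Longrightarrow> inv_count n (T \<tau>) + inv_count n \<tau> = Cp n"
    for T
    unfolding p_def using main_generic[OF assms(1-6) that] by blast
  have e1: "(\<lambda>\<omega> i. if i \<in> {1..n} then p \<omega> (n + 1 - i) else i) = (\<lambda>\<omega>. T1 n (p \<omega>))"
    by (simp add: T1_def)
  have e2: "(\<lambda>\<omega> i. if i \<in> {1..n} then n + 1 - inv (p \<omega>) i else i) = (\<lambda>\<omega>. T4 n (inv (p \<omega>)))"
    by (simp add: T4_def)
  have e3: "(\<lambda>\<omega> i. if i \<in> {1..n} then inv (p \<omega>) (n + 1 - i) else i) = (\<lambda>\<omega>. T1 n (inv (p \<omega>)))"
    by (simp add: T1_def)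
  have e4: "(\<lambda>\<omega> i. if i \<in> {1..n} then n + 1 - p \<omega> i else i) = (\<lambda>\<omega>. T4 n (p \<omega>))"
    by (simp add: T4_def)
  note h1 = G[OF bij_T1 inv_T1]
  note h2 = G[OF bij_T4inv inv_T4inv]
  note h3 = G[OF bij_T1inv inv_T1inv]
  note h4 = G[OF bij_T4 inv_T4]
  show ?thesis unfolding e1 e2 e3 e4 using h1 h2 h3 h4 by blast
qed

end
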